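(* Let $X$ be a finite set and $F_X:\mathbf{pow}(X)\to\mathbb{R}$ a filtration. Then for every $\sigma\in\mathbf{pow}(X)$, $$F_X(\sigma)=\min\{T_X(\sigma)\mid T_X \text{ is a tree filtration over }X\text{ with }T_X(\tau)\geq F_X(\tau)\text{ for all }\tau\in\mathbf{pow}(X)\},$$ and the minimum may be taken over a finite set of such tree filtrations.
   Context: $\mathbf{pow}(X)$ is the set of nonempty subsets of $X$. A filtration over $X$ is an order-preserving map $F_X:(\mathbf{pow}(X),\subset)\to(\mathbb{R},\leq)$. A symmetric ultranetwork over $X$ is a map $U_X:X\times X\to\mathbb{R}$ with $U_X(x,x')=U_X(x',x)$ and $U_X(x,x'')\leq\max\{U_X(x,x'),U_X(x',x'')\}$ for all $x,x',x''\in X$. A tree filtration is a filtration of the form $T_X(\sigma)=\max_{x,x'\in\sigma}U_X(x,x')$ for some symmetric ultranetwork $U_X$ (its Vietoris–Rips filtration). *)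

theory Defs
  imports Complex_Main
begin

definition pow :: "'a set \<Rightarrow> 'a set set" where
  "pow X = {\<sigma>. \<sigma> \<subseteq> X \<and> \<sigma> \<noteq> {}}"

definition filtration :: "'a set \<Rightarrow> ('a set \<Rightarrow> real) \<Rightarrow> bool" where
  "filtration X F \<longleftrightarrow> (\<forall>\<sigma>\<in>pow X. \<forall>\<tau>\<in>pow X. \<sigma> \<subseteq> \<tau> \<longrightarrow> F \<sigma> \<le> F \<tau>)"

definition sym_ultranetwork :: "'a set \<Rightarrow> ('a \<Rightarrow> 'a \<Rightarrow> real) \<Rightarrow> bool" where
  "sym_ultranetwork X U \<longleftrightarrow>
     (\<forall>x\<in>X. \<forall>x'\<in>X. U x x' = U x' x) \<and>
     (\<forall>x\<in>X. \<forall>x'\<in>X. \<forall>x''\<in>X. U x x'' \<le> max (U x x') (U x' x''))"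

text \<open>A tree filtration over X: the Vietoris--Rips filtration of some symmetric ultranetwork.\<close>
definition tree_filtration :: "'a set \<Rightarrow> ('a set \<Rightarrow> real) \<Rightarrow> bool" where
  "tree_filtration X T \<longleftrightarrow>
     (\<exists>U. sym_ultranetwork X U \<and>
          (\<forall>\<sigma>\<in>pow X. T \<sigma> = Max {U x x' | x x'. x \<in> \<sigma> \<and> x' \<in> \<sigma>}))"

end

theory Submission
  imports Defs
begin

lemma tree_ok:
  assumes fin: "finite X" and filt: "filtration X F" and rho: "\<rho> \<in> pow X"
  shows "tree_filtration X (\<lambda>\<tau>. if \<tau> \<subseteq> \<rho> then F \<rho> else F X)"
proof -
  have Xp: "X \<in> pow X" using rho by (auto simp: pow_def)
  have le: "F \<rho> \<le> F X" using filt rho Xp by (auto simp: filtration_def pow_def)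
  define U where "U = (\<lambda>x x'. if x \<in> \<rho> \<and> x' \<in> \<rho> then F \<rho> else F X)"
  have su: "sym_ultranetwork X U" using le unfolding sym_ultranetwork_def U_def by auto
  have "\<forall>\<sigma>\<in>pow X. (if \<sigma> \<subseteq> \<rho> then F \<rho> else F X) = Max {U x x' | x x'. x \<in> \<sigma> \<and> x' \<in> \<sigma>}"
  proof
    fix \<sigma> assume s: "\<sigma> \<in> pow X"
    let ?A = "{U x x' | x x'. x \<in> \<sigma> \<and> x' \<in> \<sigma>}"
    have sub: "?A \<subseteq> {F \<rho>, F X}" by (auto simp: U_def)
    hence finA: "finite ?A" by (rule finite_subset) simp
    obtain y where y: "y \<in> \<sigma>" using s by (auto simp: pow_def)
    show "(if \<sigma> \<subseteq> \<rho> then F \<rho> else F X) = Max ?A"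
    proof (cases "\<sigma> \<subseteq> \<rho>")
      case True
      have "?A = {F \<rho>}" using True y by (auto simp: U_def)
      thus ?thesis using True by simp
    next
      case False
      then obtain z where z: "z \<in> \<sigma>" "z \<notin> \<rho>" by auto
      have "F X \<in> ?A" using z by (force simp: U_def)
      moreover have "\<forall>a\<in>?A. a \<le> F X" using le by (auto simp: U_def)
      ultimately have "Max ?A = F X" using finA by (intro Max_eqI) auto
      thus ?thesis using False by simp
    qed
  qed
  thus ?thesis using su unfolding tree_filtration_def by blast
qed

lemma tree_ge:
  assumes filt: "filtration X F" and rho: "\<rho> \<in> pow X" and t: "\<tau> \<in> pow X"
  shows "F \<tau> \<le> (if \<tau> \<subseteq> \<rho> then F \<rho> else F X)"
proof -
  have Xp: "X \<in> pow X" using rho by (auto simp: pow_def)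
  show ?thesis using filt rho Xp t by (auto simp: filtration_def pow_def)
qed

theorem mainTheorem5:
  fixes X :: "'a set" and F :: "'a set \<Rightarrow> real"
  assumes "finite X"
    and "filtration X F"
  shows "(\<forall>\<sigma>\<in>pow X.
            F \<sigma> \<in> {T \<sigma> | T. tree_filtration X T \<and> (\<forall>\<tau>\<in>pow X. F \<tau> \<le> T \<tau>)} \<and>
            (\<forall>T. tree_filtration X T \<and> (\<forall>\<tau>\<in>pow X. F \<tau> \<le> T \<tau>) \<longrightarrow> F \<sigma> \<le> T \<sigma>))
         \<and> (\<exists>S. finite S \<and> S \<noteq> {} \<and>
               (\<forall>T\<in>S. tree_filtration X T \<and> (\<forall>\<tau>\<in>pow X. F \<tau> \<le> T \<tau>)) \<and>
               (\<forall>\<sigma>\<in>pow X. F \<sigma> = Min ((\<lambda>T. T \<sigma>) ` S)))"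
proof -
  define Tr where "Tr = (\<lambda>\<rho> \<tau>. if \<tau> \<subseteq> \<rho> then F \<rho> else F X)"
  have good: "tree_filtration X (Tr \<rho>) \<and> (\<forall>\<tau>\<in>pow X. F \<tau> \<le> Tr \<rho> \<tau>)" if "\<rho> \<in> pow X" for \<rho>
    using tree_ok[OF assms that] tree_ge[OF assms(2) that] unfolding Tr_def by blast
  have self: "Tr \<sigma> \<sigma> = F \<sigma>" for \<sigma> by (simp add: Tr_def)
  have part1: "\<forall>\<sigma>\<in>pow X.
            F \<sigma> \<in> {T \<sigma> | T. tree_filtration X T \<and> (\<forall>\<tau>\<in>pow X. F \<tau> \<le> T \<tau>)} \<and>
            (\<forall>T. tree_filtration X T \<and> (\<forall>\<tau>\<in>pow X. F \<tau> \<le> T \<tau>) \<longrightarrow> F \<sigma> \<le> T \<sigma>)"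
  proof
    fix \<sigma> assume s: "\<sigma> \<in> pow X"
    have "F \<sigma> = Tr \<sigma> \<sigma>" by (simp add: self)
    thus "F \<sigma> \<in> {T \<sigma> | T. tree_filtration X T \<and> (\<forall>\<tau>\<in>pow X. F \<tau> \<le> T \<tau>)} \<and>
            (\<forall>T. tree_filtration X T \<and> (\<forall>\<tau>\<in>pow X. F \<tau> \<le> T \<tau>) \<longrightarrow> F \<sigma> \<le> T \<sigma>)"
      using good[OF s] s by blast
  qed
  have finpow: "finite (pow X)" using assms(1) unfolding pow_def by simp
  have part2: "\<exists>S. finite S \<and> S \<noteq> {} \<and>
               (\<forall>T\<in>S. tree_filtration X T \<and> (\<forall>\<tau>\<in>pow X. F \<tau> \<le> T \<tau>)) \<and>
               (\<forall>\<sigma>\<in>pow X. F \<sigma> = Min ((\<lambda>T. T \<sigma>) ` S))"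
  proof (cases "X = {}")
    case True
    hence pe: "pow X = {}" by (auto simp: pow_def)
    have "tree_filtration X (\<lambda>_. 0)" unfolding tree_filtration_def sym_ultranetwork_def
      using True pe by auto
    thus ?thesis using pe by (intro exI[of _ "{\<lambda>_. 0}"]) auto
  next
    case False
    hence Xp: "X \<in> pow X" by (auto simp: pow_def)
    show ?thesis
    proof (rule exI[of _ "Tr ` pow X"], intro conjI)
      show "finite (Tr ` pow X)" using finpow by simp
      show "Tr ` pow X \<noteq> {}" using Xp by auto
      show "\<forall>T\<in>Tr ` pow X. tree_filtration X T \<and> (\<forall>\<tau>\<in>pow X. F \<tau> \<le> T \<tau>)"
        using good by blast
      show "\<forall>\<sigma>\<in>pow X. F \<sigma> = Min ((\<lambda>T. T \<sigma>) ` Tr ` pow X)"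
      proof
      fix \<sigma> assume s: "\<sigma> \<in> pow X"
      have eq: "(\<lambda>T. T \<sigma>) ` Tr ` pow X = (\<lambda>\<rho>. Tr \<rho> \<sigma>) ` pow X" by auto
      show "F \<sigma> = Min ((\<lambda>T. T \<sigma>) ` Tr ` pow X)" unfolding eq
      proof (rule Min_eqI[symmetric])
        show "finite ((\<lambda>\<rho>. Tr \<rho> \<sigma>) ` pow X)" using finpow by simp
        show "\<And>y. y \<in> (\<lambda>\<rho>. Tr \<rho> \<sigma>) ` pow X \<Longrightarrow> F \<sigma> \<le> y" using good s by auto
        show "F \<sigma> \<in> (\<lambda>\<rho>. Tr \<rho> \<sigma>) ` pow X" using s self by (metis image_eqI)
      qed
      qed
    qed
  qed
  show ?thesis using part1 part2 by blast
qed

end
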